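(* Let $b>0$, $m\in(0,1]$, let $h:J\to[0,\infty)$ with $(0,1)\subseteq J\subseteq\mathbb{R}$, $h\not\equiv0$, and $h^2$ Lebesgue integrable on $(0,1)$. Let $\varphi:[0,b]\to[0,b]$ and let $f:[0,b]\to\mathbb{R}$ be a Lebesgue measurable $\varphi_{h,m}$-convex function. Then for all $x,y\in[0,b]$ with $\varphi(x)\ne m\varphi(y)$, $$\frac{1}{m\varphi(y)-\varphi(x)}\int_{\varphi(x)}^{m\varphi(y)}f(u)\,f\big(\varphi(x)+m\varphi(y)-u\big)\,du\le\big[f^2(\varphi(x))+m^2f^2(\varphi(y))\big]\int_0^1h(t)h(1-t)\,dt+(m+1)\,f(\varphi(x))f(\varphi(y))\int_0^1h^2(t)\,dt.$$
   Context: Definition ($\varphi_{h,m}$-convexity). Let $b>0$, $m\in(0,1]$, $h:J\to[0,\infty)$ with $(0,1)\subseteq J$, $h\not\equiv 0$, and $\varphi:[0,b]\to[0,b]$. A function $f:[0,b]\to\mathbb{R}$ is called $\varphi_{h,m}$-convex if $f\ge 0$ and $f(t\varphi(x)+m(1-t)\varphi(y))\le h(t)f(\varphi(x))+m\,h(1-t)f(\varphi(y))$ for all $x,y\in[0,b]$, $t\in(0,1)$. Integrals over an interval with endpoints in reversed order are oriented, so the left-hand side is the average of a non-negative function over the interval between $\varphi(x)$ and $m\varphi(y)$ (a value in $[0,\infty]$). *)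

theory Defs
  imports "HOL-Analysis.Analysis"
begin

text \<open>phi_{h,m}-convexity of f on [0,b] (f and phi are total functions; only values on
  [0,b] matter).\<close>
definition phi_hm_convex ::
  "real \<Rightarrow> real \<Rightarrow> (real \<Rightarrow> real) \<Rightarrow> (real \<Rightarrow> real) \<Rightarrow> (real \<Rightarrow> real) \<Rightarrow> bool" where
  "phi_hm_convex b m h \<phi> f \<longleftrightarrow>
     (\<forall>x\<in>{0..b}. 0 \<le> f x) \<and>
     (\<forall>x\<in>{0..b}. \<forall>y\<in>{0..b}. \<forall>t\<in>{0<..<1}.
        f (t * \<phi> x + m * (1 - t) * \<phi> y) \<le> h t * f (\<phi> x) + m * h (1 - t) * f (\<phi> y))"

end

theory Submission
  imports Defs
begin

theorem theorem2p1:
  fixes b m :: real and J :: "real set" and h \<phi> f :: "real \<Rightarrow> real"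
  assumes b: "0 < b"
    and m: "0 < m" "m \<le> 1"
    and J: "{0<..<1} \<subseteq> J"
    and h_nonneg: "\<forall>t\<in>J. 0 \<le> h t"
    and h_nz: "\<exists>t\<in>J. h t \<noteq> 0"
    and h2_int: "set_integrable lborel {0<..<1} (\<lambda>t. (h t)\<^sup>2)"
    and phi: "\<phi> ` {0..b} \<subseteq> {0..b}"
    and f_meas: "set_borel_measurable lebesgue {0..b} f"
    and conv: "phi_hm_convex b m h \<phi> f"
    and x: "x \<in> {0..b}" and y: "y \<in> {0..b}"
    and ne: "\<phi> x \<noteq> m * \<phi> y"
  shows "ennreal (1 / \<bar>m * \<phi> y - \<phi> x\<bar>) *
           (\<integral>\<^sup>+ u \<in> {min (\<phi> x) (m * \<phi> y) .. max (\<phi> x) (m * \<phi> y)}.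
               ennreal (f u * f (\<phi> x + m * \<phi> y - u)) \<partial>lebesgue)
         \<le> ennreal (((f (\<phi> x))\<^sup>2 + m\<^sup>2 * (f (\<phi> y))\<^sup>2) * (LBINT t:{0<..<1}. h t * h (1 - t))
                    + (m + 1) * f (\<phi> x) * f (\<phi> y) * (LBINT t:{0<..<1}. (h t)\<^sup>2))"
proof -
  define a where "a = \<phi> x"
  define c where "c = m * \<phi> y"
  define A where "A = f (\<phi> x)"
  define B where "B = f (\<phi> y)"
  define q where "q t = indicator {0<..<1::real} t * (h t)\<^sup>2" for t
  define hh where "hh t = sqrt (q t)" for t
  define p where "p t = hh t * hh (1 - t)" for t
  define G where "G t = (hh t * A + m * hh (1-t) * B) * (hh (1-t) * A + m * hh t * B)" for t
  have q_int: "integrable lborel q" using h2_int unfolding set_integrable_def q_def by simp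
  have q_meas[measurable]: "q \<in> borel_measurable borel"
    using borel_measurable_integrable[OF q_int] by simp
  have q_nn: "q t \<ge> 0" for t by (simp add: q_def)
  have hh_in: "t \<in> {0<..<1} \<Longrightarrow> hh t = h t" for t using h_nonneg J by (auto simp: hh_def q_def)
  have hh_out: "t \<notin> {0<..<1} \<Longrightarrow> hh t = 0" for t by (simp add: hh_def q_def)
  have hh_nn: "hh t \<ge> 0" for t by (simp add: hh_def q_nn)
  have hh_sq: "(hh t)\<^sup>2 = q t" for t by (simp add: hh_def q_nn)
  have hh_meas[measurable]: "hh \<in> borel_measurable borel" unfolding hh_def[abs_def] by measurable
  have p_meas[measurable]: "p \<in> borel_measurable borel" unfolding p_def[abs_def] by measurable
  have q1_int: "integrable lborel (\<lambda>t. q (1 - t))"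
    using lborel_integrable_real_affine[OF q_int, of "-1" 1] by simp
  have q1_eq: "(\<integral>t. q (1 - t) \<partial>lborel) = (\<integral>t. q t \<partial>lborel)"
    using lborel_integral_real_affine[of "-1" q 1] by simp
  have p_le: "norm (p t) \<le> norm ((q t + q (1 - t)) / 2)" for t
  proof -
    have "0 \<le> (hh t - hh (1-t))\<^sup>2" by simp
    then have "2 * (hh t * hh (1-t)) \<le> (hh t)\<^sup>2 + (hh (1-t))\<^sup>2" by (simp add: power2_eq_square algebra_simps)
    then show ?thesis using hh_nn[of t] hh_nn[of "1-t"] q_nn[of t] q_nn[of "1-t"]
      by (simp add: p_def hh_sq)
  qed
  have p_int: "integrable lborel p"
    by (rule Bochner_Integration.integrable_bound[OF _ _ AE_I2[OF p_le]])
       (use q_int q1_int in auto)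
  have G_eq: "G t = (A\<^sup>2 + m\<^sup>2 * B\<^sup>2) * p t + (m * A * B) * q t + (m * A * B) * q (1 - t)" for t
    unfolding G_def p_def hh_sq[symmetric] by (simp add: power2_eq_square algebra_simps)
  have G_int: "integrable lborel G"
    unfolding G_eq using p_int q_int q1_int by auto
  have G_meas[measurable]: "G \<in> borel_measurable borel"
    using borel_measurable_integrable[OF G_int] by simp
  have pxy: "\<phi> x \<in> {0..b}" "\<phi> y \<in> {0..b}" using phi x y by (auto simp: image_subset_iff)
  have A_nn: "A \<ge> 0" and B_nn: "B \<ge> 0"
    using conv pxy unfolding phi_hm_convex_def A_def B_def by auto
  have G_nn: "G t \<ge> 0" for t
    unfolding G_def using hh_nn[of t] hh_nn[of "1-t"] A_nn B_nn m by simp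
  have G_int_val: "(\<integral>t. G t \<partial>lborel) = (A\<^sup>2 + m\<^sup>2 * B\<^sup>2) * (\<integral>t. p t \<partial>lborel) + 2 * m * A * B * (\<integral>t. q t \<partial>lborel)"
    unfolding G_eq using p_int q_int q1_int q1_eq by (simp add: algebra_simps)
  have Ip: "(LBINT t:{0<..<1}. h t * h (1 - t)) = (\<integral>t. p t \<partial>lborel)"
    unfolding set_lebesgue_integral_def
  proof (rule Bochner_Integration.integral_cong[OF refl])
    fix t show "indicator {0<..<1} t *\<^sub>R (h t * h (1 - t)) = p t"
      using hh_in[of t] hh_in[of "1-t"] hh_out[of t] by (cases "t \<in> {0<..<1}") (auto simp: p_def)
  qed
  have Iq: "(LBINT t:{0<..<1}. (h t)\<^sup>2) = (\<integral>t. q t \<partial>lborel)"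
    unfolding set_lebesgue_integral_def q_def by simp
  have Iq_nn: "(\<integral>t. q t \<partial>lborel) \<ge> 0" using q_nn by simp
  have ac: "a \<noteq> c" using ne a_def c_def by simp
  have a_rng: "0 \<le> a" "a \<le> b" using pxy a_def by auto
  have c_rng: "0 \<le> c" "c \<le> b"
  proof -
    have "0 \<le> \<phi> y" "\<phi> y \<le> b" using pxy by auto
    then show "0 \<le> c" "c \<le> b" using m c_def by (auto intro: mult_le_one order_trans[OF mult_right_mono[of m 1]])
  qed
  define lo where "lo = min a c"
  define hi where "hi = max a c"
  have pw: "ennreal (f u * f (\<phi> x + m * \<phi> y - u)) * indicator {lo..hi} u \<le> ennreal (G ((u - c) / (a - c)))"
    if u: "u \<notin> {lo, hi}" for u
  proof (cases "u \<in> {lo..hi}")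
    case False then show ?thesis by simp
  next
    case True
    with u have ui: "lo < u" "u < hi" by auto
    define t where "t = (u - c) / (a - c)"
    have t01: "0 < t" "t < 1"
    proof -
      have "(a < c \<and> a < u \<and> u < c) \<or> (c < a \<and> c < u \<and> u < a)"
        using ui ac unfolding lo_def hi_def by (auto simp: min_def max_def split: if_splits)
      then show "0 < t" "t < 1" unfolding t_def by (auto simp: field_simps)
    qed
    have e: "t * (a - c) = u - c" using ac by (simp add: t_def)
    have u_eq: "u = t * \<phi> x + m * (1 - t) * \<phi> y"
      using e unfolding a_def c_def by (simp add: algebra_simps)
    have v_eq: "\<phi> x + m * \<phi> y - u = (1 - t) * \<phi> x + m * (1 - (1 - t)) * \<phi> y"
      using u_eq by (simp add: algebra_simps)
    have u_rng: "u \<in> {0..b}" using ui a_rng c_rng unfolding lo_def hi_def by auto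
    have v_rng: "\<phi> x + m * \<phi> y - u \<in> {0..b}" using ui a_rng c_rng unfolding lo_def hi_def a_def c_def by auto
    have f_nn: "\<forall>z\<in>{0..b}. 0 \<le> f z"
      and cv: "\<And>t. t \<in> {0<..<1} \<Longrightarrow> f (t * \<phi> x + m * (1 - t) * \<phi> y) \<le> h t * f (\<phi> x) + m * h (1 - t) * f (\<phi> y)"
      using conv x y unfolding phi_hm_convex_def by auto
    have b1: "f u \<le> hh t * A + m * hh (1-t) * B"
      using cv[of t] t01 hh_in[of t] hh_in[of "1-t"] u_eq A_def B_def by simp
    have b2: "f (\<phi> x + m * \<phi> y - u) \<le> hh (1-t) * A + m * hh t * B"
      using cv[of "1-t"] t01 hh_in[of t] hh_in[of "1-t"] v_eq A_def B_def by simp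
    have fu: "0 \<le> f u" "0 \<le> f (\<phi> x + m * \<phi> y - u)" using f_nn u_rng v_rng by auto
    have "f u * f (\<phi> x + m * \<phi> y - u) \<le> G t"
      unfolding G_def
      by (rule mult_mono[OF b1 b2]) (use fu b1 in linarith)+
    then show ?thesis using True t_def by (simp add: ennreal_leI)
  qed
  have lo': "lo = min (\<phi> x) (m * \<phi> y)" and hi': "hi = max (\<phi> x) (m * \<phi> y)"
    by (simp_all add: lo_def hi_def a_def c_def)
  have nl: "{lo, hi} \<in> null_sets lebesgue" by simp
  have "(\<integral>\<^sup>+ u \<in> {min (\<phi> x) (m * \<phi> y) .. max (\<phi> x) (m * \<phi> y)}.
               ennreal (f u * f (\<phi> x + m * \<phi> y - u)) \<partial>lebesgue)
        \<le> (\<integral>\<^sup>+ u. ennreal (G ((u - c) / (a - c))) \<partial>lebesgue)"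
    unfolding lo'[symmetric] hi'[symmetric]
    by (rule nn_integral_mono_AE, rule eventually_mono[OF AE_not_in[OF nl]], rule pw)
  also have "\<dots> = (\<integral>\<^sup>+ u. ennreal (G ((u - c) / (a - c))) \<partial>lborel)"
    by (rule nn_integral_completion)
  also have "\<dots> = ennreal \<bar>a - c\<bar> * (\<integral>\<^sup>+ t. ennreal (G t) \<partial>lborel)"
  proof -
    have "(\<integral>\<^sup>+ u. ennreal (G ((u - c) / (a - c))) \<partial>lborel)
      = ennreal \<bar>a - c\<bar> * (\<integral>\<^sup>+ t. ennreal (G ((c + (a - c) * t - c) / (a - c))) \<partial>lborel)"
      by (rule nn_integral_real_affine) (use ac in auto)
    also have "(\<lambda>t. ennreal (G ((c + (a - c) * t - c) / (a - c)))) = (\<lambda>t. ennreal (G t))"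
      using ac by simp
    finally show ?thesis .
  qed
  also have "(\<integral>\<^sup>+ t. ennreal (G t) \<partial>lborel) = ennreal (\<integral>t. G t \<partial>lborel)"
    by (rule nn_integral_eq_integral[OF G_int]) (use G_nn in auto)
  finally have L: "(\<integral>\<^sup>+ u \<in> {min (\<phi> x) (m * \<phi> y) .. max (\<phi> x) (m * \<phi> y)}.
               ennreal (f u * f (\<phi> x + m * \<phi> y - u)) \<partial>lebesgue)
        \<le> ennreal \<bar>a - c\<bar> * ennreal (\<integral>t. G t \<partial>lborel)" .
  have dd: "\<bar>m * \<phi> y - \<phi> x\<bar> = \<bar>a - c\<bar>" by (simp add: a_def c_def abs_minus_commute)
  have "ennreal (1 / \<bar>m * \<phi> y - \<phi> x\<bar>) *
           (\<integral>\<^sup>+ u \<in> {min (\<phi> x) (m * \<phi> y) .. max (\<phi> x) (m * \<phi> y)}.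
               ennreal (f u * f (\<phi> x + m * \<phi> y - u)) \<partial>lebesgue)
        \<le> ennreal (1 / \<bar>a - c\<bar>) * (ennreal \<bar>a - c\<bar> * ennreal (\<integral>t. G t \<partial>lborel))"
    unfolding dd using L by (intro mult_left_mono) auto
  also have "\<dots> = ennreal (\<integral>t. G t \<partial>lborel)"
    using ac by (simp add: ennreal_mult'[symmetric] mult.assoc[symmetric])
  also have "\<dots> \<le> ennreal (((f (\<phi> x))\<^sup>2 + m\<^sup>2 * (f (\<phi> y))\<^sup>2) * (LBINT t:{0<..<1}. h t * h (1 - t))
                    + (m + 1) * f (\<phi> x) * f (\<phi> y) * (LBINT t:{0<..<1}. (h t)\<^sup>2))"
  proof (rule ennreal_leI)
    have "2 * m * A * B * (\<integral>t. q t \<partial>lborel) \<le> (m + 1) * A * B * (\<integral>t. q t \<partial>lborel)"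
      using m A_nn B_nn Iq_nn by (intro mult_right_mono mult_right_mono) auto
    then show "(\<integral>t. G t \<partial>lborel) \<le> ((f (\<phi> x))\<^sup>2 + m\<^sup>2 * (f (\<phi> y))\<^sup>2) * (LBINT t:{0<..<1}. h t * h (1 - t))
                    + (m + 1) * f (\<phi> x) * f (\<phi> y) * (LBINT t:{0<..<1}. (h t)\<^sup>2)"
      unfolding G_int_val Ip Iq A_def[symmetric] B_def[symmetric] by simp
  qed
  finally show ?thesis .
qed

end
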